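(* Let $I\subset\mathbb R$ be a bounded closed non-degenerate interval and $f\in L^{r_0}(I)$ for some $r_0>1$. Then $\tau^f_{1+}:=\lim_{r\downarrow1}\tau_r^f$ exists, and $\tau^f_{1+}\in B^f$.
   Context: For $f\in L^r(I)$ with $r>1$, $\tau_r^f$ denotes the unique real number minimizing $t\mapsto\|f-t\|_{L^r(I)}$. A measurable $g:I\to\overline{\mathbb R}$ is balanced if $|\lambda(\{g>0\})-\lambda(\{g<0\})|\le\lambda(\{g=0\})$ ($\lambda$ Lebesgue measure); $B^f=\{t\in\mathbb R:f-t\text{ is balanced}\}$. *)

theory Defs
  imports "HOL-Analysis.Analysis"
begin

definition in_Lr :: "real \<Rightarrow> real set \<Rightarrow> (real \<Rightarrow> real) \<Rightarrow> bool" where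
  "in_Lr r I f \<longleftrightarrow> set_borel_measurable lebesgue I f
      \<and> set_integrable lebesgue I (\<lambda>x. \<bar>f x\<bar> powr r)"

definition Lr_norm :: "real \<Rightarrow> real set \<Rightarrow> (real \<Rightarrow> real) \<Rightarrow> real" where
  "Lr_norm r I f = (LINT x:I|lebesgue. \<bar>f x\<bar> powr r) powr (1 / r)"

definition tau :: "real \<Rightarrow> real set \<Rightarrow> (real \<Rightarrow> real) \<Rightarrow> real" where
  "tau r I f = (THE t. \<forall>s. Lr_norm r I (\<lambda>x. f x - t) \<le> Lr_norm r I (\<lambda>x. f x - s))"

definition balanced :: "real set \<Rightarrow> (real \<Rightarrow> real) \<Rightarrow> bool" where
  "balanced I g \<longleftrightarrow>
     \<bar>measure lebesgue {x\<in>I. g x > 0} - measure lebesgue {x\<in>I. g x < 0}\<bar>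
       \<le> measure lebesgue {x\<in>I. g x = 0}"

definition balanced_set :: "real set \<Rightarrow> (real \<Rightarrow> real) \<Rightarrow> real set" where
  "balanced_set I f = {t. balanced I (\<lambda>x. f x - t)}"

end

theory Submission
  imports Defs
begin


lemma powr_le_one_plus:
  fixes y a b :: real
  assumes "0 \<le> a" "a \<le> b" "0 \<le> y"
  shows "y powr a \<le> 1 + y powr b"
proof (cases "y \<le> 1")
  case True
  then have "y powr a \<le> 1" using assms by (simp add: powr_le1)
  then show ?thesis using powr_ge_zero[of y b] by linarith
next
  case False
  then have "y powr a \<le> y powr b" using assms by (intro powr_mono) auto
  then show ?thesis by simp
qed

lemma sum_powr_le:
  fixes x y p :: real
  assumes "0 \<le> x" "0 \<le> y" "0 \<le> p"
  shows "(x + y) powr p \<le> 2 powr p * (x powr p + y powr p)"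
proof -
  have "(x + y) powr p \<le> (2 * max x y) powr p"
    using assms by (intro powr_mono2) auto
  also have "\<dots> = 2 powr p * (max x y) powr p"
    using assms by (simp add: powr_mult)
  also have "(max x y) powr p \<le> x powr p + y powr p"
    by (cases "x \<le> y") (auto simp: max_def)
  then have "2 powr p * (max x y) powr p \<le> 2 powr p * (x powr p + y powr p)"
    by (intro mult_left_mono) auto
  finally show ?thesis .
qed

definition sg :: "real \<Rightarrow> real \<Rightarrow> real" where
  "sg s y = sgn y * \<bar>y\<bar> powr s"

lemma sg_strict_mono:
  assumes "0 < s" "y < z"
  shows "sg s y < sg s z"
proof -
  consider "0 \<le> y" | "y < 0" "0 < z" | "z \<le> 0" by linarith
  then show ?thesis
  proof cases
    case 1
    then show ?thesis using assms
      by (auto simp: sg_def sgn_if intro!: powr_less_mono2)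
  next
    case 2
    then show ?thesis using assms by (auto simp: sg_def sgn_if) (smt (verit) powr_ge_zero powr_gt_zero)
  next
    case 3
    then have "\<bar>z\<bar> powr s < \<bar>y\<bar> powr s" using assms
      by (intro powr_less_mono2) auto
    then show ?thesis using assms 3 by (auto simp: sg_def sgn_if)
  qed
qed

lemma sg_mono: "0 < s \<Longrightarrow> y \<le> z \<Longrightarrow> sg s y \<le> sg s z"
  by (metis order_le_less sg_strict_mono)

lemma isCont_sg:
  assumes "0 < s"
  shows "isCont (sg s) y"
proof (cases "y = 0")
  case True
  have "((\<lambda>y. \<bar>y\<bar> powr s) \<longlongrightarrow> \<bar>0\<bar> powr s) (at 0)"
    using assms by (intro tendsto_intros continuous_intros) auto
  then have "((\<lambda>y. \<bar>y\<bar> powr s) \<longlongrightarrow> 0) (at 0)" using assms by simp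
  then have "((\<lambda>y. \<bar>sg s y\<bar>) \<longlongrightarrow> 0) (at 0)"
    by (rule Lim_transform_eventually) (auto simp: sg_def abs_mult sgn_if intro!: always_eventually)
  then have "(sg s \<longlongrightarrow> 0) (at 0)"
    using tendsto_rabs_zero_iff by blast
  then show ?thesis using True by (simp add: isCont_def sg_def)
next
  case False
  show ?thesis
  proof (cases "y > 0")
    case True
    have "isCont (\<lambda>y. y powr s) y" using True by (intro continuous_intros) auto
    moreover have ev: "\<forall>\<^sub>F z in nhds y. z powr s = sg s z"
      using eventually_nhds_in_open[of "{0<..}" y] True
      by (auto elim!: eventually_mono simp: sg_def)
    ultimately show ?thesis
      using isCont_cong[OF ev] by simp
  next
    case False2: False
    then have neg: "y < 0" using False by auto
    have "isCont (\<lambda>y. - ((-y) powr s)) y" using neg by (intro continuous_intros) auto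
    moreover have ev: "\<forall>\<^sub>F z in nhds y. - ((-z) powr s) = sg s z"
      using eventually_nhds_in_open[of "{..<0}" y] neg
      by (auto elim!: eventually_mono simp: sg_def)
    ultimately show ?thesis
      using isCont_cong[OF ev] by simp
  qed
qed

lemma bern_strict:
  fixes u r :: real
  assumes "0 < u" "u \<noteq> 1" "1 < r"
  shows "1 + r * (u - 1) < u powr r"
proof -
  define g where "g = (\<lambda>v::real. v powr r - r * v)"
  have der: "DERIV g v :> (r * v powr (r - 1) - r)" if "0 < v" for v
    unfolding g_def using that
    by (auto intro!: derivative_eq_intros)
  show ?thesis
  proof (cases "u > 1")
    case True
    obtain z where z: "1 < z" "z < u" "g u - g 1 = (u - 1) * (r * z powr (r - 1) - r)"
      using MVT2[of 1 u g "\<lambda>v. r * v powr (r - 1) - r"] True der by force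
    have "1 < z powr (r - 1)"
      using z assms powr_less_mono2[of "r - 1" 1 z] by simp
    then have "0 < (u - 1) * (r * z powr (r - 1) - r)"
      using True assms by (intro mult_pos_pos) auto
    then show ?thesis using z(3) by (simp add: g_def algebra_simps)
  next
    case False
    then have u1: "u < 1" using assms by auto
    obtain z where z: "u < z" "z < 1" "g 1 - g u = (1 - u) * (r * z powr (r - 1) - r)"
      using MVT2[of u 1 g "\<lambda>v. r * v powr (r - 1) - r"] u1 der assms by force
    have "z powr (r - 1) < 1"
      using z assms powr_less_mono2[of "r - 1" z 1] by simp
    then have "(1 - u) * (r * z powr (r - 1) - r) < 0"
      using u1 assms by (intro mult_pos_neg) auto
    then show ?thesis using z(3) by (simp add: g_def algebra_simps)
  qed
qed

lemma tangent_pos: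
  fixes y z r :: real
  assumes "0 < z" "y \<noteq> z" "1 < r"
  shows "\<bar>y\<bar> powr r > z powr r + r * z powr (r - 1) * (y - z)"
proof (cases "y \<le> 0")
  case True
  have zz: "z powr (r - 1) * z = z powr r"
    using assms by (simp add: powr_diff)
  have "r * z powr (r - 1) * (y - z) \<le> r * z powr (r - 1) * (- z)"
    using True assms by (intro mult_left_mono) auto
  also have "\<dots> = - r * z powr r" using zz by (simp add: algebra_simps)
  finally have "z powr r + r * z powr (r - 1) * (y - z) \<le> (1 - r) * z powr r"
    by (simp add: algebra_simps)
  also have "\<dots> < 0" using assms by (intro mult_neg_pos) auto
  finally show ?thesis using powr_ge_zero[of "\<bar>y\<bar>" r] by linarith
next
  case False
  define u where "u = y / z"
  have u: "0 < u" "u \<noteq> 1" using False assms by (auto simp: u_def)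
  have yz: "y = u * z" using assms by (simp add: u_def)
  have "(1 + r * (u - 1)) * z powr r < u powr r * z powr r"
    using bern_strict[OF u assms(3)] assms by (intro mult_strict_right_mono) auto
  also have "u powr r * z powr r = \<bar>y\<bar> powr r"
    using u assms False by (simp add: yz powr_mult)
  also have "(1 + r * (u - 1)) * z powr r = z powr r + r * z powr (r - 1) * (y - z)"
  proof -
    have "z powr r = z powr (r - 1) * z"
      using assms by (simp add: powr_diff)
    then show ?thesis by (simp add: yz algebra_simps)
  qed
  finally show ?thesis .
qed

lemma tangent:
  fixes y z r :: real
  assumes "y \<noteq> z" "1 < r"
  shows "\<bar>y\<bar> powr r > \<bar>z\<bar> powr r + r * sg (r - 1) z * (y - z)"
proof -
  consider "0 < z" | "z = 0" | "z < 0" by linarith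
  then show ?thesis
  proof cases
    case 1
    then show ?thesis using tangent_pos[OF 1 assms] by (simp add: sg_def)
  next
    case 2
    then show ?thesis using assms by (simp add: sg_def)
  next
    case 3
    have "\<bar>-y\<bar> powr r > (-z) powr r + r * (-z) powr (r - 1) * ((-y) - (-z))"
      using tangent_pos[of "-z" "-y" r] 3 assms by simp
    then show ?thesis using 3 by (simp add: sg_def algebra_simps)
  qed
qed

lemma log_bounds:
  fixes y s :: real
  assumes "0 < y" "0 < s"
  shows "s * ln y \<le> y powr s - 1" "y powr s - 1 \<le> y powr s * (s * ln y)"
proof -
  have "ln (y powr s) = s * ln y" using assms by (simp add: ln_powr)
  moreover have "ln (y powr s) \<le> y powr s - 1" using assms by (intro ln_le_minus_one) auto
  ultimately show "s * ln y \<le> y powr s - 1" by simp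
  define z where "z = y powr s"
  have z: "0 < z" using assms by (simp add: z_def)
  have "ln (1 / z) \<le> 1 / z - 1" using z by (intro ln_le_minus_one) auto
  then have "- ln z \<le> 1 / z - 1" using z by (simp add: ln_div)
  then have "z * (- ln z) \<le> z * (1 / z - 1)" using z by (intro mult_left_mono) auto
  then have "z - 1 \<le> z * ln z" using z by (simp add: algebra_simps)
  then show "y powr s - 1 \<le> y powr s * (s * ln y)"
    using assms by (simp add: z_def ln_powr)
qed

lemma diffquot_lim:
  fixes y :: real
  assumes "0 < y"
  shows "((\<lambda>s. (y powr s - 1) / s) \<longlongrightarrow> ln y) (at_right 0)"
proof -
  have "((\<lambda>s. exp (s * ln y)) has_real_derivative (exp (0 * ln y) * ln y)) (at 0)"
    by (auto intro!: derivative_eq_intros)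
  then have "((\<lambda>s. (exp (s * ln y) - exp (0 * ln y)) / (s - 0)) \<longlongrightarrow> ln y) (at 0)"
    unfolding has_field_derivative_iff by simp
  then have "((\<lambda>s. (y powr s - 1) / s) \<longlongrightarrow> ln y) (at 0)"
    using assms by (simp add: powr_def)
  then show ?thesis by (rule tendsto_mono[OF at_within_le_at])
qed



lemma measurable_sg[measurable]: "sg s \<in> borel_measurable borel"
  unfolding sg_def by measurable

locale tsetup = finite_measure M for M :: "'a measure" +
  fixes f :: "'a \<Rightarrow> real" and r0 :: real
  assumes pos: "0 < measure M (space M)"
    and fm[measurable]: "f \<in> borel_measurable M"
    and r0: "1 < r0"
    and fint: "integrable M (\<lambda>x. \<bar>f x\<bar> powr r0)"
begin

definition "phi r t = (\<integral>x. sg (r - 1) (f x - t) \<partial>M)"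
definition "F r t = (\<integral>x. \<bar>f x - t\<bar> powr r \<partial>M)"
definition "Pm t = measure M {x\<in>space M. t < f x}"
definition "Nm t = measure M {x\<in>space M. f x < t}"

lemma W_int: "0 \<le> C \<Longrightarrow> integrable M (\<lambda>x. 1 + (\<bar>f x\<bar> + C) powr r0)"
proof -
  assume C: "0 \<le> C"
  have "integrable M (\<lambda>x. 1 + 2 powr r0 * (\<bar>f x\<bar> powr r0 + C powr r0))"
    by (intro Bochner_Integration.integrable_add integrable_mult_right integrable_const fint)
  then show ?thesis
  proof (rule Bochner_Integration.integrable_bound)
    show "AE x in M. norm (1 + (\<bar>f x\<bar> + C) powr r0) \<le> norm (1 + 2 powr r0 * (\<bar>f x\<bar> powr r0 + C powr r0))"
      using sum_powr_le[of "\<bar>f _\<bar>" C r0] C r0 by (auto intro!: AE_I2 simp: add_nonneg_nonneg)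
  qed measurable
qed

lemma dom_bound:
  assumes "0 \<le> p" "p \<le> r0" "\<bar>t\<bar> \<le> C"
  shows "\<bar>f x - t\<bar> powr p \<le> 1 + (\<bar>f x\<bar> + C) powr r0"
proof -
  have "\<bar>f x - t\<bar> powr p \<le> 1 + \<bar>f x - t\<bar> powr r0"
    using assms by (intro powr_le_one_plus) auto
  also have "\<bar>f x - t\<bar> powr r0 \<le> (\<bar>f x\<bar> + C) powr r0"
    using assms r0 by (intro powr_mono2) auto
  finally show ?thesis by simp
qed

lemma dom_bound_sg:
  assumes "0 \<le> p" "p \<le> r0" "\<bar>t\<bar> \<le> C"
  shows "\<bar>sg p (f x - t)\<bar> \<le> 1 + (\<bar>f x\<bar> + C) powr r0"
proof -
  have "\<bar>sg p (f x - t)\<bar> \<le> \<bar>f x - t\<bar> powr p"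
    by (auto simp: sg_def abs_mult sgn_if)
  then show ?thesis using dom_bound[OF assms, of x] by linarith
qed

lemma int_pow: "0 \<le> p \<Longrightarrow> p \<le> r0 \<Longrightarrow> integrable M (\<lambda>x. \<bar>f x - t\<bar> powr p)"
  by (rule Bochner_Integration.integrable_bound[OF W_int[of "\<bar>t\<bar>"]])
     (use dom_bound in \<open>auto intro!: AE_I2\<close>)

lemma int_sg: "0 \<le> p \<Longrightarrow> p \<le> r0 \<Longrightarrow> integrable M (\<lambda>x. sg p (f x - t))"
  by (rule Bochner_Integration.integrable_bound[OF W_int[of "\<bar>t\<bar>"]])
     (use dom_bound_sg in \<open>auto intro!: AE_I2\<close>)

lemma space_nz: "emeasure M (space M) \<noteq> 0"
  using pos by (simp add: emeasure_eq_measure)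

lemma phi_strict_mono:
  assumes "1 < r" "r \<le> r0" "t < t'"
  shows "phi r t' < phi r t"
  unfolding phi_def
  using assms
  by (intro integral_less_AE_space int_sg space_nz AE_I2 sg_strict_mono) auto

lemma phi1_mono:
  assumes "t \<le> t'"
  shows "phi 1 t' \<le> phi 1 t"
proof -
  have "sg 0 y = sgn y" for y by (simp add: sg_def sgn_if)
  then show ?thesis unfolding phi_def
    using assms r0 int_sg[of 0] by (intro integral_mono) (auto simp: sgn_if)
qed

lemma phi1_eq: "phi 1 t = Pm t - Nm t"
proof -
  have "phi 1 t = (\<integral>x. indicator {x\<in>space M. t < f x} x - indicator {x\<in>space M. f x < t} x \<partial>M)"
    unfolding phi_def by (rule Bochner_Integration.integral_cong) (auto simp: sg_def sgn_if indicator_def)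
  also have "\<dots> = Pm t - Nm t"
    unfolding Pm_def Nm_def
    by (subst Bochner_Integration.integral_diff) (auto simp: Int_absorb2 integrable_indicator_iff emeasure_eq_measure)
  finally show ?thesis .
qed

end

context tsetup begin

lemma phi_cont:
  assumes "1 < r" "r \<le> r0"
  shows "isCont (phi r) z"
proof (rule continuous_at_sequentiallyI)
  fix u assume u: "u \<longlonglongrightarrow> z"
  then have "Bseq u" by (intro convergent_imp_Bseq convergentI)
  then obtain K where K: "\<And>n. norm (u n) \<le> K" by (auto simp: Bseq_def)
  have K0: "0 \<le> K" using K[of 0] by auto
  show "(\<lambda>n. phi r (u n)) \<longlonglongrightarrow> phi r z"
    unfolding phi_def
  proof (rule integral_dominated_convergence[where w="\<lambda>x. 1 + (\<bar>f x\<bar> + K) powr r0"])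
    show "integrable M (\<lambda>x. 1 + (\<bar>f x\<bar> + K) powr r0)" using K0 by (rule W_int)
    show "AE x in M. (\<lambda>n. sg (r - 1) (f x - u n)) \<longlonglongrightarrow> sg (r - 1) (f x - z)"
      using assms
      by (intro AE_I2 isCont_tendsto_compose[OF isCont_sg] tendsto_intros u) auto
    show "AE x in M. norm (sg (r - 1) (f x - u n)) \<le> 1 + (\<bar>f x\<bar> + K) powr r0" for n
      using assms K[of n] by (intro AE_I2) (auto intro!: dom_bound_sg)
  qed measurable
qed

lemma phi_zero:
  assumes "1 < r" "r \<le> r0" "0 < phi r t1" "phi r t2 < 0"
  shows "\<exists>z. phi r z = 0"
proof -
  have "t1 \<le> t2"
  proof (rule ccontr)
    assume "\<not> t1 \<le> t2"
    then have "phi r t1 < phi r t2" using phi_strict_mono assms by auto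
    then show False using assms by auto
  qed
  moreover have "continuous_on {t1..t2} (phi r)"
    using phi_cont assms by (intro continuous_at_imp_continuous_on) auto
  ultimately show ?thesis
    using IVT2'[of "phi r" t2 0 t1] assms by force
qed

lemma F_min:
  assumes "1 < r" "r \<le> r0" "phi r z = 0" "s \<noteq> z"
  shows "F r z < F r s"
proof -
  have i1: "integrable M (\<lambda>x. \<bar>f x - t\<bar> powr r)" for t using assms by (intro int_pow) auto
  have i2: "integrable M (\<lambda>x. sg (r - 1) (f x - z))" using assms by (intro int_sg) auto
  have "(\<integral>x. \<bar>f x - z\<bar> powr r + r * (z - s) * sg (r - 1) (f x - z) \<partial>M) < F r s"
    unfolding F_def
  proof (intro integral_less_AE_space space_nz AE_I2)
    show "integrable M (\<lambda>x. \<bar>f x - z\<bar> powr r + r * (z - s) * sg (r - 1) (f x - z))"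
      using i1 i2 by (intro Bochner_Integration.integrable_add integrable_mult_right) auto
    show "integrable M (\<lambda>x. \<bar>f x - s\<bar> powr r)" by (rule i1)
    fix x
    have "\<bar>f x - s\<bar> powr r > \<bar>f x - z\<bar> powr r + r * sg (r - 1) (f x - z) * ((f x - s) - (f x - z))"
      using assms by (intro tangent) auto
    then show "\<bar>f x - z\<bar> powr r + r * (z - s) * sg (r - 1) (f x - z) < \<bar>f x - s\<bar> powr r"
      by (simp add: algebra_simps)
  qed
  also have "(\<integral>x. \<bar>f x - z\<bar> powr r + r * (z - s) * sg (r - 1) (f x - z) \<partial>M) = F r z + r * (z - s) * phi r z"
    unfolding F_def phi_def using i1 i2
    by (subst Bochner_Integration.integral_add) auto
  finally show ?thesis using assms by simp
qed

lemma F_nonneg: "0 \<le> F r t"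
  unfolding F_def by (intro integral_nonneg_AE AE_I2) auto

lemma THE_char:
  assumes "1 < r" "r \<le> r0" "phi r z = 0"
  shows "(THE t. \<forall>s. F r t powr (1 / r) \<le> F r s powr (1 / r)) = z"
proof (rule the_equality)
  have lt: "F r z powr (1 / r) < F r s powr (1 / r)" if "s \<noteq> z" for s
    using F_min[OF assms that] assms F_nonneg by (intro powr_less_mono2) auto
  then show "\<forall>s. F r z powr (1 / r) \<le> F r s powr (1 / r)"
    by (metis order_le_less)
  fix t assume "\<forall>s. F r t powr (1 / r) \<le> F r s powr (1 / r)"
  then have "F r t powr (1 / r) \<le> F r z powr (1 / r)" by blast
  then show "t = z" using lt[of t] by linarith
qed

lemma phi_lim1: "((\<lambda>r. phi r t) \<longlongrightarrow> phi 1 t) (at_right 1)"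
proof (rule tendsto_at_right_sequentially[OF r0])
  fix S :: "nat \<Rightarrow> real"
  assume S: "\<And>n. 1 < S n" "\<And>n. S n < r0" "S \<longlonglongrightarrow> 1"
  show "(\<lambda>n. phi (S n) t) \<longlonglongrightarrow> phi 1 t"
    unfolding phi_def
  proof (rule integral_dominated_convergence[where w="\<lambda>x. 1 + (\<bar>f x\<bar> + \<bar>t\<bar>) powr r0"])
    show "integrable M (\<lambda>x. 1 + (\<bar>f x\<bar> + \<bar>t\<bar>) powr r0)" by (rule W_int) simp
    show "AE x in M. (\<lambda>n. sg (S n - 1) (f x - t)) \<longlonglongrightarrow> sg (1 - 1) (f x - t)"
    proof (intro AE_I2)
      fix x
      show "(\<lambda>n. sg (S n - 1) (f x - t)) \<longlonglongrightarrow> sg (1 - 1) (f x - t)"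
      proof (cases "f x = t")
        case True
        then show ?thesis by (simp add: sg_def)
      next
        case False
        have "(\<lambda>n. \<bar>f x - t\<bar> powr (S n - 1)) \<longlonglongrightarrow> \<bar>f x - t\<bar> powr (1 - 1)"
          using False by (intro tendsto_intros S(3)) auto
        then show ?thesis unfolding sg_def by (rule tendsto_mult[OF tendsto_const])
      qed
    qed
    show "AE x in M. norm (sg (S n - 1) (f x - t)) \<le> 1 + (\<bar>f x\<bar> + \<bar>t\<bar>) powr r0" for n
      using S(1,2)[of n] by (intro AE_I2) (auto intro!: dom_bound_sg)
  qed measurable
qed

end

context tsetup begin

lemma ex_pos: "\<exists>t. 0 < phi 1 t"
proof -
  have l1: "(\<lambda>n. Pm (- real n)) \<longlonglongrightarrow> measure M (\<Union>n. {x\<in>space M. - real n < f x})"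
    unfolding Pm_def
    by (rule Lim_measure_incseq) (auto simp: incseq_def emeasure_eq_measure)
  have u: "(\<Union>n. {x\<in>space M. - real n < f x}) = space M"
  proof safe
    fix x assume "x \<in> space M"
    obtain n :: nat where "- f x < real n" using reals_Archimedean2 by blast
    then show "x \<in> (\<Union>n. {x\<in>space M. - real n < f x})" using \<open>x \<in> space M\<close> by (intro UN_I[of n]) auto
  qed
  have l2: "(\<lambda>n. Nm (- real n)) \<longlonglongrightarrow> measure M (\<Inter>n. {x\<in>space M. f x < - real n})"
    unfolding Nm_def
    by (rule Lim_measure_decseq) (auto simp: decseq_def emeasure_eq_measure)
  have i: "(\<Inter>n. {x\<in>space M. f x < - real n}) = {}"
  proof safe
    fix x assume x: "x \<in> (\<Inter>n. {x\<in>space M. f x < - real n})"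
    obtain n :: nat where "- f x < real n" using reals_Archimedean2 by blast
    moreover from x have "f x < - real n" by blast
    ultimately show "x \<in> {}" by linarith
  qed
  have "(\<lambda>n. phi 1 (- real n)) \<longlonglongrightarrow> measure M (space M) - 0"
    unfolding phi1_eq using tendsto_diff[OF l1 l2] u i by simp
  then have "\<forall>\<^sub>F n in sequentially. 0 < phi 1 (- real n)"
    using pos by (intro order_tendstoD(1)) auto
  then show ?thesis by (meson eventually_sequentially order_refl)
qed

lemma ex_neg: "\<exists>t. phi 1 t < 0"
proof -
  have l1: "(\<lambda>n. Nm (real n)) \<longlonglongrightarrow> measure M (\<Union>n. {x\<in>space M. f x < real n})"
    unfolding Nm_def
    by (rule Lim_measure_incseq) (auto simp: incseq_def emeasure_eq_measure)
  have u: "(\<Union>n. {x\<in>space M. f x < real n}) = space M"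
  proof safe
    fix x assume "x \<in> space M"
    obtain n :: nat where "f x < real n" using reals_Archimedean2 by blast
    then show "x \<in> (\<Union>n. {x\<in>space M. f x < real n})" using \<open>x \<in> space M\<close> by (intro UN_I[of n]) auto
  qed
  have l2: "(\<lambda>n. Pm (real n)) \<longlonglongrightarrow> measure M (\<Inter>n. {x\<in>space M. real n < f x})"
    unfolding Pm_def
    by (rule Lim_measure_decseq) (auto simp: decseq_def emeasure_eq_measure)
  have i: "(\<Inter>n. {x\<in>space M. real n < f x}) = {}"
  proof safe
    fix x assume x: "x \<in> (\<Inter>n. {x\<in>space M. real n < f x})"
    obtain n :: nat where "f x < real n" using reals_Archimedean2 by blast
    moreover from x have "real n < f x" by blast
    ultimately show "x \<in> {}" by linarith
  qed
  have "(\<lambda>n. phi 1 (real n)) \<longlonglongrightarrow> 0 - measure M (space M)"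
    unfolding phi1_eq using tendsto_diff[OF l2 l1] u i by simp
  then have "\<forall>\<^sub>F n in sequentially. phi 1 (real n) < 0"
    using pos by (intro order_tendstoD(2)) auto
  then show ?thesis by (meson eventually_sequentially order_refl)
qed

lemma balanced_pt:
  assumes R: "\<And>t. c < t \<Longrightarrow> phi 1 t \<le> 0" and L: "\<And>t. t < c \<Longrightarrow> 0 \<le> phi 1 t"
  shows "\<bar>Pm c - Nm c\<bar> \<le> measure M {x\<in>space M. f x = c}"
proof -
  define E where "E = measure M {x\<in>space M. f x = c}"
  have r1: "(\<lambda>n. Pm (c + 1 / Suc n)) \<longlonglongrightarrow> measure M (\<Union>n. {x\<in>space M. c + 1 / Suc n < f x})"
    unfolding Pm_def
  proof (rule Lim_measure_incseq)
    show "incseq (\<lambda>n. {x \<in> space M. c + 1 / real (Suc n) < f x})"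
      unfolding incseq_def
    proof safe
      fix m n :: nat and x assume "m \<le> n" "c + 1 / real (Suc m) < f x"
      moreover have "1 / real (Suc n) \<le> 1 / real (Suc m)" using \<open>m \<le> n\<close>
        by (intro divide_left_mono) auto
      ultimately show "c + 1 / real (Suc n) < f x" by linarith
    qed
  qed (auto simp: emeasure_eq_measure)
  have u1: "(\<Union>n. {x\<in>space M. c + 1 / Suc n < f x}) = {x\<in>space M. c < f x}"
  proof safe
    fix x assume x: "x \<in> space M" "c < f x"
    then have "0 < f x - c" by auto
    then obtain n :: nat where "1 / real (Suc n) < f x - c"
      by (metis Suc_eq_plus1 nat_approx_posE of_nat_Suc)
    then show "x \<in> (\<Union>n. {x\<in>space M. c + 1 / Suc n < f x})" using x by (intro UN_I[of n]) auto
  next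
    fix x n assume "c + 1 / real (Suc n) < f x"
    moreover have "0 < 1 / real (Suc n)" by simp
    ultimately show "c < f x" by linarith
  qed
  have r2: "(\<lambda>n. Nm (c + 1 / Suc n)) \<longlonglongrightarrow> measure M (\<Inter>n. {x\<in>space M. f x < c + 1 / Suc n})"
    unfolding Nm_def
  proof (rule Lim_measure_decseq)
    show "decseq (\<lambda>n. {x \<in> space M. f x < c + 1 / real (Suc n)})"
      unfolding decseq_def
    proof safe
      fix m n :: nat and x assume "m \<le> n" "f x < c + 1 / real (Suc n)"
      moreover have "1 / real (Suc n) \<le> 1 / real (Suc m)" using \<open>m \<le> n\<close>
        by (intro divide_left_mono) auto
      ultimately show "f x < c + 1 / real (Suc m)" by linarith
    qed
  qed (auto simp: emeasure_eq_measure)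
  have i2: "(\<Inter>n. {x\<in>space M. f x < c + 1 / Suc n}) = {x\<in>space M. f x < c} \<union> {x\<in>space M. f x = c}"
  proof safe
    fix x assume x: "x \<in> (\<Inter>n. {x\<in>space M. f x < c + 1 / Suc n})" "f x \<noteq> c"
    then have xs: "x \<in> space M" by auto
    show "f x < c"
    proof (rule ccontr)
      assume "\<not> f x < c"
      then have "0 < f x - c" using x by auto
      then obtain n :: nat where "1 / real (Suc n) < f x - c"
        by (metis Suc_eq_plus1 nat_approx_posE of_nat_Suc)
      moreover from x(1) have "f x < c + 1 / real (Suc n)" by blast
      ultimately show False by linarith
    qed
  next
    fix x n assume "f x < c"
    moreover have "0 < 1 / real (Suc n)" by simp
    ultimately show "f x < c + 1 / real (Suc n)" by linarith
  qed auto
  have r1': "(\<lambda>n. Pm (c + 1 / Suc n)) \<longlonglongrightarrow> Pm c"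
    using r1 u1 by (simp add: Pm_def)
  have right: "Pm c \<le> Nm c + E"
  proof -
    have "Pm c \<le> measure M (\<Inter>n. {x\<in>space M. f x < c + 1 / Suc n})"
    proof (rule LIMSEQ_le[OF r1' r2])
      show "\<exists>N. \<forall>n\<ge>N. Pm (c + 1 / real (Suc n)) \<le> Nm (c + 1 / real (Suc n))"
        using R[of "c + 1 / real (Suc _)"] phi1_eq by (auto simp: Pm_def)
    qed
    also have "\<dots> = Nm c + E"
      unfolding i2 Nm_def E_def by (subst finite_measure_Union) auto
    finally show ?thesis .
  qed
  have l1: "(\<lambda>n. Nm (c - 1 / Suc n)) \<longlonglongrightarrow> measure M (\<Union>n. {x\<in>space M. f x < c - 1 / Suc n})"
    unfolding Nm_def
  proof (rule Lim_measure_incseq)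
    show "incseq (\<lambda>n. {x \<in> space M. f x < c - 1 / real (Suc n)})"
      unfolding incseq_def
    proof safe
      fix m n :: nat and x assume "m \<le> n" "f x < c - 1 / real (Suc m)"
      moreover have "1 / real (Suc n) \<le> 1 / real (Suc m)" using \<open>m \<le> n\<close>
        by (intro divide_left_mono) auto
      ultimately show "f x < c - 1 / real (Suc n)" by linarith
    qed
  qed (auto simp: emeasure_eq_measure)
  have u3: "(\<Union>n. {x\<in>space M. f x < c - 1 / Suc n}) = {x\<in>space M. f x < c}"
  proof safe
    fix x assume x: "x \<in> space M" "f x < c"
    then have "0 < c - f x" by auto
    then obtain n :: nat where "1 / real (Suc n) < c - f x"
      by (metis Suc_eq_plus1 nat_approx_posE of_nat_Suc)
    then show "x \<in> (\<Union>n. {x\<in>space M. f x < c - 1 / Suc n})" using x by (intro UN_I[of n]) auto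
  next
    fix x n assume "f x < c - 1 / real (Suc n)"
    moreover have "0 < 1 / real (Suc n)" by simp
    ultimately show "f x < c" by linarith
  qed
  have l1': "(\<lambda>n. Nm (c - 1 / Suc n)) \<longlonglongrightarrow> Nm c"
    using l1 u3 by (simp add: Nm_def)
  have l2: "(\<lambda>n. Pm (c - 1 / Suc n)) \<longlonglongrightarrow> measure M (\<Inter>n. {x\<in>space M. c - 1 / Suc n < f x})"
    unfolding Pm_def
  proof (rule Lim_measure_decseq)
    show "decseq (\<lambda>n. {x \<in> space M. c - 1 / real (Suc n) < f x})"
      unfolding decseq_def
    proof safe
      fix m n :: nat and x assume "m \<le> n" "c - 1 / real (Suc n) < f x"
      moreover have "1 / real (Suc n) \<le> 1 / real (Suc m)" using \<open>m \<le> n\<close>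
        by (intro divide_left_mono) auto
      ultimately show "c - 1 / real (Suc m) < f x" by linarith
    qed
  qed (auto simp: emeasure_eq_measure)
  have i4: "(\<Inter>n. {x\<in>space M. c - 1 / Suc n < f x}) = {x\<in>space M. c < f x} \<union> {x\<in>space M. f x = c}"
  proof safe
    fix x assume x: "x \<in> (\<Inter>n. {x\<in>space M. c - 1 / Suc n < f x})" "f x \<noteq> c"
    show "c < f x"
    proof (rule ccontr)
      assume "\<not> c < f x"
      then have "0 < c - f x" using x by auto
      then obtain n :: nat where "1 / real (Suc n) < c - f x"
        by (metis Suc_eq_plus1 nat_approx_posE of_nat_Suc)
      moreover from x(1) have "c - 1 / real (Suc n) < f x" by blast
      ultimately show False by linarith
    qed
  next
    fix x n assume "c < f x"
    moreover have "0 < 1 / real (Suc n)" by simp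
    ultimately show "c - 1 / real (Suc n) < f x" by linarith
  qed auto
  have left: "Nm c \<le> Pm c + E"
  proof -
    have "Nm c \<le> measure M (\<Inter>n. {x\<in>space M. c - 1 / Suc n < f x})"
    proof (rule LIMSEQ_le[OF l1' l2])
      show "\<exists>N. \<forall>n\<ge>N. Nm (c - 1 / real (Suc n)) \<le> Pm (c - 1 / real (Suc n))"
        using L[of "c - 1 / real (Suc _)"] phi1_eq by (auto simp: Nm_def)
    qed
    also have "\<dots> = Pm c + E"
      unfolding i4 Pm_def E_def by (subst finite_measure_Union) auto
    finally show ?thesis .
  qed
  show ?thesis using left right unfolding E_def by linarith
qed

end

context tsetup begin

definition "Psi t = (\<integral>x. sgn (f x - t) * ln \<bar>f x - t\<bar> \<partial>M)"

lemma gap: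
  assumes "\<sigma> < \<upsilon>" "phi 1 \<sigma> = 0" "phi 1 \<upsilon> = 0"
  shows "AE x in M. f x \<le> \<sigma> \<or> \<upsilon> \<le> f x"
proof -
  define A where "A = {x\<in>space M. \<sigma> < f x}"
  define B where "B = {x\<in>space M. \<upsilon> < f x}"
  define C where "C = {x\<in>space M. f x < \<upsilon>}"
  define D where "D = {x\<in>space M. f x < \<sigma>}"
  have s: "A \<in> sets M" "B \<in> sets M" "C \<in> sets M" "D \<in> sets M"
    unfolding A_def B_def C_def D_def by measurable
  have m1: "measure M (A - B) = Pm \<sigma> - Pm \<upsilon>"
    unfolding Pm_def A_def[symmetric] B_def[symmetric]
    using s assms(1) by (subst finite_measure_Diff) (auto simp: A_def B_def)
  have m2: "measure M (C - D) = Nm \<upsilon> - Nm \<sigma>"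
    unfolding Nm_def C_def[symmetric] D_def[symmetric]
    using s assms(1) by (subst finite_measure_Diff) (auto simp: C_def D_def)
  have "measure M (A - B) + measure M (C - D) = 0"
    using m1 m2 assms phi1_eq by simp
  then have "measure M (A - B) = 0" by (smt (verit) measure_nonneg)
  then have "A - B \<in> null_sets M"
    using s by (auto simp: null_sets_def emeasure_eq_measure)
  then show ?thesis
    by (rule AE_I') (auto simp: A_def B_def)
qed

lemma ln_abs_bound:
  fixes u \<delta> :: real
  assumes "0 < \<delta>" "\<delta> \<le> u"
  shows "\<bar>ln u\<bar> \<le> \<bar>ln \<delta>\<bar> + u"
proof (cases "1 \<le> u")
  case True
  then have "ln u \<le> u - 1" using ln_le_minus_one[of u] by linarith
  moreover have "0 \<le> ln u" using True by simp
  ultimately show ?thesis by linarith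
next
  case False
  then have "ln u < 0" using assms by simp
  moreover have "ln \<delta> \<le> ln u" using assms by simp
  ultimately show ?thesis using assms by linarith
qed

lemma psi_int:
  assumes "0 < \<delta>" "AE x in M. f x = t \<or> \<delta> \<le> \<bar>f x - t\<bar>"
  shows "integrable M (\<lambda>x. sgn (f x - t) * ln \<bar>f x - t\<bar>)"
proof (rule Bochner_Integration.integrable_bound)
  have "integrable M (\<lambda>x. \<bar>f x - t\<bar> powr 1)" using r0 by (intro int_pow) auto
  then have "integrable M (\<lambda>x. \<bar>f x - t\<bar>)" by simp
  then show "integrable M (\<lambda>x. \<bar>ln \<delta>\<bar> + \<bar>f x - t\<bar>)"
    by (intro Bochner_Integration.integrable_add integrable_const)
  show "AE x in M. norm (sgn (f x - t) * ln \<bar>f x - t\<bar>) \<le> norm (\<bar>ln \<delta>\<bar> + \<bar>f x - t\<bar>)"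
    using assms(2)
  proof eventually_elim
    case (elim x)
    then show ?case
    proof
      assume "f x = t" then show ?thesis by simp
    next
      assume "\<delta> \<le> \<bar>f x - t\<bar>"
      then have "\<bar>ln \<bar>f x - t\<bar>\<bar> \<le> \<bar>ln \<delta>\<bar> + \<bar>f x - t\<bar>"
        using assms by (intro ln_abs_bound) auto
      then show ?thesis by (auto simp: abs_mult sgn_if)
    qed
  qed
qed measurable

lemma Psi_strict:
  assumes "\<sigma> < t" "t < t'" "t' < \<upsilon>" "AE x in M. f x \<le> \<sigma> \<or> \<upsilon> \<le> f x"
  shows "Psi t' < Psi t"
  unfolding Psi_def
proof (rule integral_less_AE_space)
  have d1: "AE x in M. f x = t \<or> min (t - \<sigma>) (\<upsilon> - t) \<le> \<bar>f x - t\<bar>"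
    using assms(4) by eventually_elim (use assms in auto)
  have d2: "AE x in M. f x = t' \<or> min (t' - \<sigma>) (\<upsilon> - t') \<le> \<bar>f x - t'\<bar>"
    using assms(4) by eventually_elim (use assms in auto)
  show "integrable M (\<lambda>x. sgn (f x - t) * ln \<bar>f x - t\<bar>)"
    using assms by (intro psi_int[OF _ d1]) auto
  show "integrable M (\<lambda>x. sgn (f x - t') * ln \<bar>f x - t'\<bar>)"
    using assms by (intro psi_int[OF _ d2]) auto
  show "emeasure M (space M) \<noteq> 0" by (rule space_nz)
  show "AE x in M. sgn (f x - t') * ln \<bar>f x - t'\<bar> < sgn (f x - t) * ln \<bar>f x - t\<bar>"
    using assms(4)
  proof eventually_elim
    case (elim x)
    then show ?case
    proof
      assume "f x \<le> \<sigma>"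
      then have "ln (t - f x) < ln (t' - f x)" using assms by (intro ln_less_cancel_iff[THEN iffD2]) auto
      then show ?thesis using \<open>f x \<le> \<sigma>\<close> assms by (auto simp: sgn_if abs_if)
    next
      assume "\<upsilon> \<le> f x"
      then have "ln (f x - t') < ln (f x - t)" using assms by (intro ln_less_cancel_iff[THEN iffD2]) auto
      then show ?thesis using \<open>\<upsilon> \<le> f x\<close> assms by (auto simp: sgn_if abs_if)
    qed
  qed
qed

lemma q_bound:
  assumes "0 < \<delta>" "\<delta> \<le> 1" "\<delta> \<le> u" "0 < s" "s \<le> (r0 - 1) / 2"
  shows "\<bar>(u powr s - 1) / s\<bar> \<le> - ln \<delta> + u powr (r0 - 1) / ((r0 - 1) / 2)"
proof -
  define s0 where "s0 = (r0 - 1) / 2"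
  have s0: "0 < s0" using r0 by (simp add: s0_def)
  have u0: "0 < u" using assms by linarith
  have lb: "s * ln u \<le> u powr s - 1" and ub: "u powr s - 1 \<le> u powr s * (s * ln u)"
    using log_bounds[OF u0 assms(4)] by auto
  define q where "q = (u powr s - 1) / s"
  have q1: "ln u \<le> q" using lb assms by (simp add: q_def field_simps)
  have q2: "q \<le> u powr s * ln u" using ub assms by (simp add: q_def field_simps)
  have lnd: "0 \<le> - ln \<delta>" using assms by simp
  have pp: "0 \<le> u powr (r0 - 1) / s0" using s0 by simp
  show ?thesis
  proof (cases "1 \<le> u")
    case True
    have lnu: "0 \<le> ln u" using True by simp
    have "u powr s \<le> u powr s0" using True assms by (intro powr_mono) (auto simp: s0_def)
    then have "u powr s * ln u \<le> u powr s0 * ln u" using lnu by (intro mult_right_mono)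
    also have "ln u \<le> u powr s0 / s0"
    proof -
      have "s0 * ln u \<le> u powr s0 - 1" using log_bounds(1)[OF u0 s0] .
      then have "ln u \<le> (u powr s0 - 1) / s0" using s0 by (simp add: field_simps)
      also have "\<dots> \<le> u powr s0 / s0" using s0 by (simp add: divide_right_mono)
      finally show ?thesis .
    qed
    then have "u powr s0 * ln u \<le> u powr s0 * (u powr s0 / s0)" by (intro mult_left_mono) auto
    also have "\<dots> = u powr (r0 - 1) / s0"
      using u0 by (simp add: s0_def powr_add[symmetric])
    finally have "q \<le> u powr (r0 - 1) / s0" using q2 by linarith
    moreover have "0 \<le> q" using q1 lnu by linarith
    ultimately show ?thesis using lnd by (simp add: q_def s0_def)
  next
    case False
    have "ln u \<le> 0" using False u0 by simp
    then have "u powr s * ln u \<le> 0" by (simp add: mult_nonneg_nonpos)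
    then have "\<bar>q\<bar> \<le> - ln u" using q1 q2 by linarith
    also have "- ln u \<le> - ln \<delta>" using assms by simp
    finally show ?thesis using pp by (simp add: q_def s0_def)
  qed
qed

lemma phi_quot:
  assumes "1 < r" "r \<le> r0" "phi 1 t = 0"
  shows "phi r t / (r - 1) = (\<integral>x. sgn (f x - t) * ((\<bar>f x - t\<bar> powr (r - 1) - 1) / (r - 1)) \<partial>M)"
proof -
  have "phi r t / (r - 1) = (phi r t - phi 1 t) / (r - 1)" using assms by simp
  also have "\<dots> = (\<integral>x. (sg (r - 1) (f x - t) - sg (1 - 1) (f x - t)) / (r - 1) \<partial>M)"
    unfolding phi_def using assms r0
    by (subst integral_divide_zero, subst Bochner_Integration.integral_diff) (auto intro!: int_sg)
  also have "\<dots> = (\<integral>x. sgn (f x - t) * ((\<bar>f x - t\<bar> powr (r - 1) - 1) / (r - 1)) \<partial>M)"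
    by (rule Bochner_Integration.integral_cong) (auto simp: sg_def sgn_if diff_divide_distrib)
  finally show ?thesis .
qed

lemma psi_lim:
  assumes "phi 1 t = 0" "0 < \<delta>" "\<delta> \<le> 1" "AE x in M. f x = t \<or> \<delta> \<le> \<bar>f x - t\<bar>"
  shows "((\<lambda>r. phi r t / (r - 1)) \<longlongrightarrow> Psi t) (at_right 1)"
proof (rule tendsto_at_right_sequentially)
  show "1 < 1 + (r0 - 1) / 2" using r0 by simp
  fix S :: "nat \<Rightarrow> real"
  assume S: "\<And>n. 1 < S n" "\<And>n. S n < 1 + (r0 - 1) / 2" "S \<longlonglongrightarrow> 1"
  have rr: "1 + (r0 - 1) / 2 \<le> r0" using r0 by (simp add: field_simps)
  have Sr: "S n \<le> r0" for n using S(2)[of n] rr by linarith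
  define w where "w = (\<lambda>x. - ln \<delta> + (1 + (\<bar>f x\<bar> + \<bar>t\<bar>) powr r0) / ((r0 - 1) / 2))"
  have "(\<lambda>n. \<integral>x. sgn (f x - t) * ((\<bar>f x - t\<bar> powr (S n - 1) - 1) / (S n - 1)) \<partial>M) \<longlonglongrightarrow> Psi t"
    unfolding Psi_def
  proof (rule integral_dominated_convergence[where w=w])
    show "integrable M w" unfolding w_def
      by (intro Bochner_Integration.integrable_add integrable_const integrable_divide_zero W_int) auto
    have fl: "filterlim (\<lambda>n. S n - 1) (at_right 0) sequentially"
      unfolding filterlim_at
    proof
      show "\<forall>\<^sub>F n in sequentially. S n - 1 \<in> {0<..} \<and> S n - 1 \<noteq> 0"
      proof (intro always_eventually allI)
        fix n show "S n - 1 \<in> {0<..} \<and> S n - 1 \<noteq> 0" using S(1)[of n] by simp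
      qed
      show "((\<lambda>n. S n - 1) \<longlongrightarrow> 0) sequentially"
        using tendsto_diff[OF S(3) tendsto_const[of 1]] by simp
    qed
    show "AE x in M. (\<lambda>n. sgn (f x - t) * ((\<bar>f x - t\<bar> powr (S n - 1) - 1) / (S n - 1)))
           \<longlonglongrightarrow> sgn (f x - t) * ln \<bar>f x - t\<bar>"
    proof (intro AE_I2)
      fix x
      show "(\<lambda>n. sgn (f x - t) * ((\<bar>f x - t\<bar> powr (S n - 1) - 1) / (S n - 1)))
           \<longlonglongrightarrow> sgn (f x - t) * ln \<bar>f x - t\<bar>"
      proof (cases "f x = t")
        case True then show ?thesis by simp
      next
        case False
        have "(\<lambda>n. (\<bar>f x - t\<bar> powr (S n - 1) - 1) / (S n - 1)) \<longlonglongrightarrow> ln \<bar>f x - t\<bar>"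
          using filterlim_compose[OF diffquot_lim fl, of "\<bar>f x - t\<bar>"] False by (simp add: o_def)
        then show ?thesis by (rule tendsto_mult[OF tendsto_const])
      qed
    qed
    show "AE x in M. norm (sgn (f x - t) * ((\<bar>f x - t\<bar> powr (S n - 1) - 1) / (S n - 1))) \<le> w x" for n
      using assms(4)
    proof eventually_elim
      case (elim x)
      then show ?case
      proof
        assume ft: "f x = t"
        have a: "0 \<le> - ln \<delta>" using assms by simp
        have b: "0 \<le> (1 + (\<bar>f x\<bar> + \<bar>t\<bar>) powr r0) / ((r0 - 1) / 2)"
          using r0 by (intro divide_nonneg_pos add_nonneg_nonneg) auto
        have "w x \<ge> 0" unfolding w_def using a b by linarith
        then show ?thesis using ft by simp
      next
        assume d: "\<delta> \<le> \<bar>f x - t\<bar>"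
        have "\<bar>(\<bar>f x - t\<bar> powr (S n - 1) - 1) / (S n - 1)\<bar>
              \<le> - ln \<delta> + \<bar>f x - t\<bar> powr (r0 - 1) / ((r0 - 1) / 2)"
        proof (rule q_bound)
          show "S n - 1 \<le> (r0 - 1) / 2" using S(2)[of n] by (simp add: field_simps)
        qed (use S(1)[of n] assms d in auto)
        also have "\<bar>f x - t\<bar> powr (r0 - 1) \<le> 1 + (\<bar>f x\<bar> + \<bar>t\<bar>) powr r0"
          using r0 by (intro dom_bound) auto
        then have "\<bar>f x - t\<bar> powr (r0 - 1) / ((r0 - 1) / 2) \<le> (1 + (\<bar>f x\<bar> + \<bar>t\<bar>) powr r0) / ((r0 - 1) / 2)"
          using r0 by (intro divide_right_mono) auto
        finally have X: "\<bar>(\<bar>f x - t\<bar> powr (S n - 1) - 1) / (S n - 1)\<bar> \<le> w x"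
          by (simp add: w_def)
        have "f x \<noteq> t" using d assms by auto
        then have s1: "\<bar>sgn (f x - t)\<bar> = 1" by (simp add: abs_sgn_eq)
        show ?thesis using X by (simp only: real_norm_def abs_mult s1 mult_1)
      qed
    qed
  qed measurable
  then show "(\<lambda>n. phi (S n) t / (S n - 1)) \<longlonglongrightarrow> Psi t"
    by (simp only: phi_quot[OF S(1) Sr assms(1)])
qed

end

context tsetup begin

definition "tauM r = (THE t. \<forall>s. F r t powr (1 / r) \<le> F r s powr (1 / r))"

lemma ev_r: "\<forall>\<^sub>F r in at_right 1. 1 < r \<and> r \<le> r0"
proof -
  have "\<forall>\<^sub>F r in at_right 1. r < r0"
    unfolding eventually_at_right_field using r0 by (auto intro!: exI[of _ r0])
  moreover have "\<forall>\<^sub>F r in at_right (1::real). 1 < r" by (rule eventually_at_right_less)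
  ultimately show ?thesis by eventually_elim auto
qed

lemma eventually_tau: "\<forall>\<^sub>F r in at_right 1. 1 < r \<and> r \<le> r0 \<and> phi r (tauM r) = 0"
proof -
  obtain t1 where t1: "0 < phi 1 t1" using ex_pos by blast
  obtain t2 where t2: "phi 1 t2 < 0" using ex_neg by blast
  have e1: "\<forall>\<^sub>F r in at_right 1. 0 < phi r t1"
    using order_tendstoD(1)[OF phi_lim1 t1] .
  have e2: "\<forall>\<^sub>F r in at_right 1. phi r t2 < 0"
    using order_tendstoD(2)[OF phi_lim1 t2] .
  show ?thesis using e1 e2 ev_r
  proof eventually_elim
    case (elim r)
    then obtain z where z: "phi r z = 0" using phi_zero by blast
    have "tauM r = z" unfolding tauM_def using THE_char[of r z] elim z by auto
    then show ?case using elim z by auto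
  qed
qed

lemma ev_gt:
  assumes "\<forall>\<^sub>F r in at_right 1. 0 < phi r t"
  shows "\<forall>\<^sub>F r in at_right 1. t < tauM r"
  using assms eventually_tau
proof eventually_elim
  case (elim r)
  show ?case
  proof (rule ccontr)
    assume "\<not> t < tauM r"
    then have "phi r t \<le> phi r (tauM r)"
      using phi_strict_mono[of r "tauM r" t] elim by (cases "t = tauM r") auto
    then show False using elim by auto
  qed
qed

lemma ev_lt:
  assumes "\<forall>\<^sub>F r in at_right 1. phi r t < 0"
  shows "\<forall>\<^sub>F r in at_right 1. tauM r < t"
  using assms eventually_tau
proof eventually_elim
  case (elim r)
  show ?case
  proof (rule ccontr)
    assume "\<not> tauM r < t"
    then have "phi r (tauM r) \<le> phi r t"
      using phi_strict_mono[of r t "tauM r"] elim by (cases "t = tauM r") auto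
    then show False using elim by auto
  qed
qed

lemma ev_psi_pos:
  assumes "phi 1 t = 0" "0 < \<delta>" "\<delta> \<le> 1" "AE x in M. f x = t \<or> \<delta> \<le> \<bar>f x - t\<bar>" "0 < Psi t"
  shows "\<forall>\<^sub>F r in at_right 1. 0 < phi r t"
  using order_tendstoD(1)[OF psi_lim[OF assms(1-4)] assms(5)] ev_r
  by eventually_elim (auto simp: zero_less_divide_iff)

lemma ev_psi_neg:
  assumes "phi 1 t = 0" "0 < \<delta>" "\<delta> \<le> 1" "AE x in M. f x = t \<or> \<delta> \<le> \<bar>f x - t\<bar>" "Psi t < 0"
  shows "\<forall>\<^sub>F r in at_right 1. phi r t < 0"
  using order_tendstoD(2)[OF psi_lim[OF assms(1-4)] assms(5)] ev_r
  by eventually_elim (auto simp: divide_less_0_iff)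

theorem main_loc:
  "\<exists>L. (tauM \<longlongrightarrow> L) (at_right 1) \<and> \<bar>Pm L - Nm L\<bar> \<le> measure M {x\<in>space M. f x = L}"
proof -
  define S where "S = {t. 0 < phi 1 t}"
  define T where "T = {t. phi 1 t < 0}"
  have Sne: "S \<noteq> {}" using ex_pos by (auto simp: S_def)
  have Tne: "T \<noteq> {}" using ex_neg by (auto simp: T_def)
  have ST: "s < t" if "s \<in> S" "t \<in> T" for s t
  proof (rule ccontr)
    assume "\<not> s < t"
    then have "phi 1 s \<le> phi 1 t" using phi1_mono by auto
    then show False using that by (auto simp: S_def T_def)
  qed
  have bS: "bdd_above S" using Tne ST by (meson bdd_aboveI equals0I less_imp_le)
  have bT: "bdd_below T" using Sne ST by (meson bdd_belowI equals0I less_imp_le)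
  define \<alpha> where "\<alpha> = Sup S"
  define \<beta> where "\<beta> = Inf T"
  have ab: "\<alpha> \<le> \<beta>" unfolding \<alpha>_def \<beta>_def
    using Sne Tne ST by (intro cSup_least cInf_greatest) (auto intro: less_imp_le)
  have fa: "\<exists>t'. t < t' \<and> 0 < phi 1 t'" if "t < \<alpha>" for t
    using that Sne bS unfolding \<alpha>_def by (auto simp: less_cSup_iff S_def)
  have fb: "\<exists>t'. t' < t \<and> phi 1 t' < 0" if "\<beta> < t" for t
    using that Tne bT unfolding \<beta>_def by (auto simp: cInf_less_iff T_def)
  have fc: "phi 1 t \<le> 0" if "\<alpha> < t" for t
  proof (rule ccontr)
    assume "\<not> phi 1 t \<le> 0"
    then have "t \<in> S" by (auto simp: S_def)
    then have "t \<le> \<alpha>" unfolding \<alpha>_def using bS by (rule cSup_upper)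
    then show False using that by auto
  qed
  have fd: "0 \<le> phi 1 t" if "t < \<beta>" for t
  proof (rule ccontr)
    assume "\<not> 0 \<le> phi 1 t"
    then have "t \<in> T" by (auto simp: T_def)
    then have "\<beta> \<le> t" unfolding \<beta>_def using bT by (rule cInf_lower)
    then show False using that by auto
  qed
  have bal: "\<bar>Pm c - Nm c\<bar> \<le> measure M {x\<in>space M. f x = c}" if "\<alpha> \<le> c" "c \<le> \<beta>" for c
    using that fc fd by (intro balanced_pt) auto
  have lowpart: "\<forall>\<^sub>F r in at_right 1. t < tauM r" if tl: "t < \<alpha>" for t
  proof -
    obtain t' where t': "t < t'" "0 < phi 1 t'" using fa[OF tl] by blast
    have "\<forall>\<^sub>F r in at_right 1. t' < tauM r"
      by (rule ev_gt[OF order_tendstoD(1)[OF phi_lim1 t'(2)]])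
    then show ?thesis by eventually_elim (use t' in auto)
  qed
  have highpart: "\<forall>\<^sub>F r in at_right 1. tauM r < t" if tl: "\<beta> < t" for t
  proof -
    obtain t' where t': "t' < t" "phi 1 t' < 0" using fb[OF tl] by blast
    have "\<forall>\<^sub>F r in at_right 1. tauM r < t'"
      by (rule ev_lt[OF order_tendstoD(2)[OF phi_lim1 t'(2)]])
    then show ?thesis by eventually_elim (use t' in auto)
  qed
  show ?thesis
  proof (cases "\<alpha> = \<beta>")
    case True
    have "(tauM \<longlongrightarrow> \<alpha>) (at_right 1)"
    proof (rule order_tendstoI)
      fix t assume "t < \<alpha>" then show "\<forall>\<^sub>F r in at_right 1. t < tauM r" by (rule lowpart)
    next
      fix t assume "\<alpha> < t" then show "\<forall>\<^sub>F r in at_right 1. tauM r < t" using True by (intro highpart) auto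
    qed
    then show ?thesis using bal[of \<alpha>] True by auto
  next
    case False
    then have ab': "\<alpha> < \<beta>" using ab by auto
    have z: "phi 1 t = 0" if "\<alpha> < t" "t < \<beta>" for t
      using fc fd that by (meson order_antisym)
    have gp: "AE x in M. f x \<le> \<sigma> \<or> \<upsilon> \<le> f x" if "\<alpha> < \<sigma>" "\<sigma> < \<upsilon>" "\<upsilon> < \<beta>" for \<sigma> \<upsilon>
      using that z by (intro gap) auto
    have dl: "\<exists>\<delta>. 0 < \<delta> \<and> \<delta> \<le> 1 \<and> (AE x in M. f x = t \<or> \<delta> \<le> \<bar>f x - t\<bar>)"
      if "\<alpha> < t" "t < \<beta>" for t
    proof -
      define \<sigma> where "\<sigma> = (\<alpha> + t) / 2"
      define \<upsilon> where "\<upsilon> = (t + \<beta>) / 2"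
      have "AE x in M. f x \<le> \<sigma> \<or> \<upsilon> \<le> f x"
        using that by (intro gp) (auto simp: \<sigma>_def \<upsilon>_def)
      then have "AE x in M. f x = t \<or> min 1 (min (t - \<sigma>) (\<upsilon> - t)) \<le> \<bar>f x - t\<bar>"
      proof eventually_elim
        case (elim x)
        have m: "min 1 (min (t - \<sigma>) (\<upsilon> - t)) \<le> t - \<sigma>" "min 1 (min (t - \<sigma>) (\<upsilon> - t)) \<le> \<upsilon> - t"
          by auto
        have "\<sigma> < t" "t < \<upsilon>" using that by (auto simp: \<sigma>_def \<upsilon>_def)
        then show ?case using elim m by (smt (verit))
      qed
      moreover have "0 < min 1 (min (t - \<sigma>) (\<upsilon> - t))" using that by (auto simp: \<sigma>_def \<upsilon>_def)
      ultimately show ?thesis by (intro exI[of _ "min 1 (min (t - \<sigma>) (\<upsilon> - t))"]) auto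
    qed
    have pm: "Psi t' < Psi t" if "\<alpha> < t" "t < t'" "t' < \<beta>" for t t'
      using that by (intro Psi_strict[of "(\<alpha> + t) / 2" _ _ "(t' + \<beta>) / 2"] gp) auto
    define Gs where "Gs = {t. \<alpha> < t \<and> t < \<beta> \<and> 0 < Psi t}"
    define \<gamma> where "\<gamma> = (if Gs = {} then \<alpha> else Sup Gs)"
    have bG: "bdd_above Gs" unfolding Gs_def by (auto intro: bdd_aboveI[of _ \<beta>])
    have ga: "\<alpha> \<le> \<gamma>"
    proof (cases "Gs = {}")
      case False
      then obtain g where "g \<in> Gs" by auto
      then have "g \<le> Sup Gs" using bG by (rule cSup_upper)
      then show ?thesis using False \<open>g \<in> Gs\<close> by (auto simp: \<gamma>_def Gs_def)
    qed (simp add: \<gamma>_def)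
    have gb: "\<gamma> \<le> \<beta>"
    proof (cases "Gs = {}")
      case False
      then show ?thesis unfolding \<gamma>_def using False by (auto intro!: cSup_least simp: Gs_def)
    qed (use ab in \<open>simp add: \<gamma>_def\<close>)
    have pe: "0 < Psi t" if "\<alpha> < t" "t < \<gamma>" for t
    proof -
      have ne: "Gs \<noteq> {}" using that by (auto simp: \<gamma>_def)
      then have "t < Sup Gs" using that by (simp add: \<gamma>_def)
      then obtain g where g: "g \<in> Gs" "t < g" using ne bG by (auto simp: less_cSup_iff)
      then have "Psi g < Psi t" using that by (intro pm) (auto simp: Gs_def)
      then show ?thesis using g by (auto simp: Gs_def)
    qed
    have pf: "Psi t < 0" if "\<gamma> < t" "t < \<beta>" for t
    proof (rule ccontr)
      assume "\<not> Psi t < 0"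
      define t' where "t' = (\<gamma> + t) / 2"
      have t': "\<alpha> < t'" "t' < t" "\<gamma> < t'" using ga that by (auto simp: t'_def)
      then have "Psi t < Psi t'" using that by (intro pm) auto
      then have "t' \<in> Gs" using t' that \<open>\<not> Psi t < 0\<close> by (auto simp: Gs_def)
      then have "Gs \<noteq> {}" "t' \<le> Sup Gs" using bG by (auto intro: cSup_upper)
      then show False using t' by (auto simp: \<gamma>_def)
    qed
    have "(tauM \<longlongrightarrow> \<gamma>) (at_right 1)"
    proof (rule order_tendstoI)
      fix t assume t: "t < \<gamma>"
      show "\<forall>\<^sub>F r in at_right 1. t < tauM r"
      proof (cases "t < \<alpha>")
        case True then show ?thesis by (rule lowpart)
      next
        case False
        define t' where "t' = (t + \<gamma>) / 2"
        have t': "\<alpha> < t'" "t' < \<gamma>" "t < t'" using False t by (auto simp: t'_def)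
        then have t'b: "t' < \<beta>" using gb by auto
        obtain \<delta> where d: "0 < \<delta>" "\<delta> \<le> 1" "AE x in M. f x = t' \<or> \<delta> \<le> \<bar>f x - t'\<bar>"
          using dl[OF t'(1) t'b] by blast
        have "\<forall>\<^sub>F r in at_right 1. t' < tauM r"
          using t' t'b by (intro ev_gt ev_psi_pos[OF _ d] z pe) auto
        then show ?thesis by eventually_elim (use t' in auto)
      qed
    next
      fix t assume t: "\<gamma> < t"
      show "\<forall>\<^sub>F r in at_right 1. tauM r < t"
      proof (cases "\<beta> < t")
        case True then show ?thesis by (rule highpart)
      next
        case False
        define t' where "t' = (\<gamma> + t) / 2"
        have t': "t' < \<beta>" "\<gamma> < t'" "t' < t" using False t by (auto simp: t'_def)
        then have t'a: "\<alpha> < t'" using ga by auto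
        obtain \<delta> where d: "0 < \<delta>" "\<delta> \<le> 1" "AE x in M. f x = t' \<or> \<delta> \<le> \<bar>f x - t'\<bar>"
          using dl[OF t'a t'(1)] by blast
        have "\<forall>\<^sub>F r in at_right 1. tauM r < t'"
          using t' t'a by (intro ev_lt ev_psi_neg[OF _ d] z pf) auto
        then show ?thesis by eventually_elim (use t' in auto)
      qed
    qed
    then show ?thesis using bal[OF ga gb] by auto
  qed
qed

end


lemma LINT_restrict:
  fixes g :: "real \<Rightarrow> real"
  shows "set_lebesgue_integral lebesgue {a..b::real} g = integral\<^sup>L (lebesgue_on {a..b}) g"
  unfolding set_lebesgue_integral_def by (rule integral_restrict_space[symmetric]) auto

theorem theorem4:
  fixes a b r0 :: real and f :: "real \<Rightarrow> real"
  assumes "a < b" and "r0 > 1" and "in_Lr r0 {a..b} f"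
  shows "\<exists>L. ((\<lambda>r. tau r {a..b} f) \<longlongrightarrow> L) (at_right 1)
             \<and> L \<in> balanced_set {a..b} f"
proof -
  define M where "M = lebesgue_on {a..b}"
  have sp: "space M = {a..b}" by (simp add: M_def)
  have em: "emeasure M {a..b} = ennreal (b - a)"
    unfolding M_def using assms(1) by (subst emeasure_restrict_space) auto
  have fm: "finite_measure M"
    by (rule finite_measureI) (simp add: sp em)
  have pos: "0 < measure M (space M)"
    using em assms(1) by (simp add: sp measure_def)
  have fmeas: "f \<in> borel_measurable M"
    using assms(3) unfolding in_Lr_def set_borel_measurable_def M_def
    by (subst borel_measurable_restrict_space_iff) auto
  have fint: "integrable M (\<lambda>x. \<bar>f x\<bar> powr r0)"
    using assms(3) unfolding in_Lr_def set_integrable_def M_def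
    by (subst integrable_restrict_space) auto
  have ts: "tsetup M f r0"
    unfolding tsetup_def tsetup_axioms_def using fm pos fmeas assms(2) fint by auto
  interpret T: tsetup M f r0 by (rule ts)
  obtain L where L: "(T.tauM \<longlongrightarrow> L) (at_right 1)"
    "\<bar>T.Pm L - T.Nm L\<bar> \<le> measure M {x\<in>space M. f x = L}"
    using T.main_loc by blast
  have teq: "tau r {a..b} f = T.tauM r" for r
  proof -
    have "tau r {a..b} f = (THE t. \<forall>s. T.F r t powr (1/r) \<le> T.F r s powr (1/r))"
      unfolding tau_def Lr_norm_def T.F_def LINT_restrict M_def[symmetric] ..
    then show ?thesis by (simp add: T.tauM_def)
  qed
  have meq: "measure lebesgue {x\<in>{a..b}. P x} = measure M {x\<in>space M. P x}"
    if "{x\<in>{a..b}. P x} \<in> sets lebesgue" for P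
    unfolding M_def using that by (subst measure_restrict_space) auto
  have "balanced {a..b} (\<lambda>x. f x - L)"
    unfolding balanced_def
  proof -
    have s1: "{x\<in>{a..b}. f x - L > 0} = {x\<in>space M. L < f x}" by (auto simp: sp)
    have s2: "{x\<in>{a..b}. f x - L < 0} = {x\<in>space M. f x < L}" by (auto simp: sp)
    have s3: "{x\<in>{a..b}. f x - L = 0} = {x\<in>space M. f x = L}" by (auto simp: sp)
    have sets: "{x\<in>space M. L < f x} \<in> sets M" "{x\<in>space M. f x < L} \<in> sets M"
      "{x\<in>space M. f x = L} \<in> sets M" using fmeas by measurable
    have mm: "measure lebesgue A = measure M A" if "A \<in> sets M" for A
    proof -
      have "A \<subseteq> {a..b}" using sets.sets_into_space[OF that] sp by auto
      then show ?thesis unfolding M_def by (subst measure_restrict_space) auto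
    qed
    show "\<bar>measure lebesgue {x\<in>{a..b}. f x - L > 0} - measure lebesgue {x\<in>{a..b}. f x - L < 0}\<bar>
       \<le> measure lebesgue {x\<in>{a..b}. f x - L = 0}"
      unfolding s1 s2 s3 mm[OF sets(1)] mm[OF sets(2)] mm[OF sets(3)]
      using L(2) by (simp add: T.Pm_def T.Nm_def)
  qed
  then have "L \<in> balanced_set {a..b} f" by (simp add: balanced_set_def)
  moreover have "((\<lambda>r. tau r {a..b} f) \<longlongrightarrow> L) (at_right 1)"
    unfolding teq using L(1) by (simp add: o_def)
  ultimately show ?thesis by blast
qed

end
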